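(* For $t\ge t_0$ let $\mathcal S^t:=\{f\in\Omega:\forall s\in(0,t): f(-s)-f(-t)>b+c_2t-c_1s\}$. Then, with closures taken in $\Omega$, $$\overline{\mathcal S^t}=\{f\in\Omega:\ \forall s\in(0,t):\ f(-s)-f(-t)\ge b+c_2t-c_1s\},\qquad \overline{\mathcal S}=\bigcup_{t\ge t_0}\overline{\mathcal S^t}.$$
   Context: $\Omega$ is the set of continuous $\omega:\mathbb R\to\mathbb R$ with $\omega(0)=0$ and $\omega(t)/(1+|t|)\to0$ as $t\to\pm\infty$, with norm $\|\omega\|_\Omega:=\sup_{t\in\mathbb R}|\omega(t)|/(1+|t|)$. Fix $b>0$, $c_1>c_2>0$, $t_0:=b/(c_1-c_2)$, and $$\mathcal S:=\{f\in\Omega:\ \exists t>t_0\ \forall s\in(0,t):\ f(-s)-f(-t)>b+c_2t-c_1s\}=\bigcup_{t>t_0}\mathcal S^t.$$ *)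

theory Defs
  imports "HOL-Analysis.Analysis"
begin

definition Omega :: "(real \<Rightarrow> real) set" where
  "Omega = {w. continuous_on UNIV w \<and> w 0 = 0 \<and>
     ((\<lambda>t. w t / (1 + \<bar>t\<bar>)) \<longlongrightarrow> 0) at_top \<and>
     ((\<lambda>t. w t / (1 + \<bar>t\<bar>)) \<longlongrightarrow> 0) at_bot}"

definition omega_norm :: "(real \<Rightarrow> real) \<Rightarrow> real" where
  "omega_norm w = (SUP t. \<bar>w t\<bar> / (1 + \<bar>t\<bar>))"

definition omega_closure :: "(real \<Rightarrow> real) set \<Rightarrow> (real \<Rightarrow> real) set" where
  "omega_closure A = {f \<in> Omega. \<forall>e>0. \<exists>g\<in>A. omega_norm (\<lambda>x. f x - g x) < e}"

definition S_t :: "real \<Rightarrow> real \<Rightarrow> real \<Rightarrow> real \<Rightarrow> (real \<Rightarrow> real) set" where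
  "S_t b c1 c2 t = {f \<in> Omega. \<forall>s\<in>{0<..<t}. f (-s) - f (-t) > b + c2 * t - c1 * s}"

definition t_zero :: "real \<Rightarrow> real \<Rightarrow> real \<Rightarrow> real" where
  "t_zero b c1 c2 = b / (c1 - c2)"

definition S_set :: "real \<Rightarrow> real \<Rightarrow> real \<Rightarrow> (real \<Rightarrow> real) set" where
  "S_set b c1 c2 = (\<Union>t\<in>{t_zero b c1 c2<..}. S_t b c1 c2 t)"

end

theory Submission
  imports Defs
begin

lemma cont_isCont: "continuous_on UNIV f \<Longrightarrow> isCont f x"
  by (simp add: continuous_on_eq_continuous_at)

lemma fl_top: "filterlim (\<lambda>x::real. 1+\<bar>x\<bar>) at_top at_top"
  unfolding filterlim_at_top eventually_at_top_linorder
  by (intro allI, rule_tac x="\<bar>Z\<bar>" in exI) auto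

lemma fl_bot: "filterlim (\<lambda>x::real. 1+\<bar>x\<bar>) at_top at_bot"
  unfolding filterlim_at_top eventually_at_bot_linorder
  by (intro allI, rule_tac x="-\<bar>Z\<bar>" in exI) auto

lemma bdd_div_tendsto:
  fixes psi :: "real \<Rightarrow> real"
  assumes "\<And>x. \<bar>psi x\<bar> \<le> M"
  shows "((\<lambda>x. psi x / (1+\<bar>x\<bar>)) \<longlongrightarrow> 0) at_top \<and> ((\<lambda>x. psi x / (1+\<bar>x\<bar>)) \<longlongrightarrow> 0) at_bot"
proof -
  have l1: "((\<lambda>x::real. M / (1+\<bar>x\<bar>)) \<longlongrightarrow> 0) at_top"
    by (rule tendsto_divide_0[OF tendsto_const filterlim_at_top_imp_at_infinity[OF fl_top]])
  have l2: "((\<lambda>x::real. M / (1+\<bar>x\<bar>)) \<longlongrightarrow> 0) at_bot"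
    by (rule tendsto_divide_0[OF tendsto_const filterlim_at_top_imp_at_infinity[OF fl_bot]])
  have b: "norm (psi x / (1+\<bar>x\<bar>)) \<le> M/(1+\<bar>x\<bar>)" for x
    using assms[of x] by (simp add: abs_divide divide_right_mono)
  show ?thesis
    using Lim_null_comparison[OF always_eventually[OF allI[OF b]] l1]
      Lim_null_comparison[OF always_eventually[OF allI[OF b]] l2] by blast
qed

lemma omega_bdd:
  assumes "w \<in> Omega" shows "bdd_above (range (\<lambda>t. \<bar>w t\<bar>/(1+\<bar>t\<bar>)))"
proof -
  let ?r = "\<lambda>t. w t/(1+\<bar>t\<bar>)"
  from assms have c: "continuous_on UNIV w" and lt: "(?r \<longlongrightarrow> 0) at_top"
    and lb: "(?r \<longlongrightarrow> 0) at_bot" by (auto simp: Omega_def)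
  have "eventually (\<lambda>t. dist (?r t) 0 < 1) at_top" by (rule tendstoD[OF lt]) simp
  then obtain A where A: "\<And>t. t \<ge> A \<Longrightarrow> \<bar>?r t\<bar> < 1"
    by (auto simp: eventually_at_top_linorder dist_real_def)
  have "eventually (\<lambda>t. dist (?r t) 0 < 1) at_bot" by (rule tendstoD[OF lb]) simp
  then obtain B where B: "\<And>t. t \<le> B \<Longrightarrow> \<bar>?r t\<bar> < 1"
    by (auto simp: eventually_at_bot_linorder dist_real_def)
  have cr: "continuous_on {min A B..A} (\<lambda>t. \<bar>?r t\<bar>)"
    by (intro continuous_intros continuous_on_subset[OF c]) auto
  obtain x where x: "\<forall>y\<in>{min A B..A}. \<bar>?r y\<bar> \<le> \<bar>?r x\<bar>"
    using continuous_attains_sup[OF compact_Icc _ cr] by auto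
  show ?thesis
  proof (rule bdd_aboveI[of _ "max 1 \<bar>?r x\<bar>"])
    fix y assume "y \<in> range (\<lambda>t. \<bar>w t\<bar>/(1+\<bar>t\<bar>))"
    then obtain t where y: "y = \<bar>?r t\<bar>" by (auto simp: abs_divide)
    show "y \<le> max 1 \<bar>?r x\<bar>"
    proof (cases "t \<ge> A \<or> t \<le> B")
      case True then have "\<bar>?r t\<bar> < 1" using A[of t] B[of t] by blast
      then show ?thesis using y by linarith
    next
      case False then have "t \<in> {min A B..A}" by auto
      then have "\<bar>?r t\<bar> \<le> \<bar>?r x\<bar>" using x by blast
      then show ?thesis using y by linarith
    qed
  qed
qed

lemma norm_le: assumes "\<And>x. \<bar>w x\<bar>/(1+\<bar>x\<bar>) \<le> M" shows "omega_norm w \<le> M"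
  unfolding omega_norm_def by (rule cSUP_least) (auto intro: assms)

lemma omega_pt: assumes "w \<in> Omega" shows "\<bar>w x\<bar> \<le> omega_norm w * (1+\<bar>x\<bar>)"
proof -
  have "\<bar>w x\<bar>/(1+\<bar>x\<bar>) \<le> omega_norm w" unfolding omega_norm_def
    by (rule cSUP_upper[OF _ omega_bdd[OF assms]]) simp
  then show ?thesis by (simp add: pos_divide_le_eq add_pos_nonneg)
qed

lemma omega_diff: assumes "f \<in> Omega" "g \<in> Omega" shows "(\<lambda>x. f x - g x) \<in> Omega"
proof -
  have e: "(\<lambda>x. (f x - g x)/(1+\<bar>x\<bar>)) = (\<lambda>x. f x/(1+\<bar>x\<bar>) - g x/(1+\<bar>x\<bar>))"
    by (simp add: diff_divide_distrib)
  have "continuous_on UNIV (\<lambda>x. f x - g x)" using assms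
    by (auto simp: Omega_def intro!: continuous_intros)
  moreover have "((\<lambda>x. (f x - g x)/(1+\<bar>x\<bar>)) \<longlongrightarrow> 0) at_top" unfolding e
    using assms tendsto_diff[where a=0 and b=0 and F=at_top] by (auto simp: Omega_def)
  moreover have "((\<lambda>x. (f x - g x)/(1+\<bar>x\<bar>)) \<longlongrightarrow> 0) at_bot" unfolding e
    using assms tendsto_diff[where a=0 and b=0 and F=at_bot] by (auto simp: Omega_def)
  ultimately show ?thesis using assms by (auto simp: Omega_def)
qed

lemma omega_addb:
  assumes "f \<in> Omega" "continuous_on UNIV psi" "psi 0 = 0" "\<And>x. \<bar>psi x\<bar> \<le> M"
  shows "(\<lambda>x. f x + psi x) \<in> Omega"
proof -
  have e: "(\<lambda>x. (f x + psi x)/(1+\<bar>x\<bar>)) = (\<lambda>x. f x/(1+\<bar>x\<bar>) + psi x/(1+\<bar>x\<bar>))"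
    by (simp add: add_divide_distrib)
  note l = bdd_div_tendsto[of psi M, OF assms(4)]
  have "continuous_on UNIV (\<lambda>x. f x + psi x)" using assms
    by (auto simp: Omega_def intro!: continuous_intros)
  moreover have "((\<lambda>x. (f x + psi x)/(1+\<bar>x\<bar>)) \<longlongrightarrow> 0) at_top" unfolding e
    using assms l tendsto_add[where a=0 and b=0 and F=at_top] by (auto simp: Omega_def)
  moreover have "((\<lambda>x. (f x + psi x)/(1+\<bar>x\<bar>)) \<longlongrightarrow> 0) at_bot" unfolding e
    using assms l tendsto_add[where a=0 and b=0 and F=at_bot] by (auto simp: Omega_def)
  ultimately show ?thesis using assms by (auto simp: Omega_def)
qed

lemma closure_St:
  "omega_closure (S_t b c1 c2 t) =
     {f \<in> Omega. \<forall>s\<in>{0<..<t}. f (-s) - f (-t) \<ge> b + c2 * t - c1 * s}"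
proof (intro equalityI subsetI)
  fix f assume f: "f \<in> omega_closure (S_t b c1 c2 t)"
  then have fO: "f \<in> Omega" by (simp add: omega_closure_def)
  have "f (-s) - f (-t) \<ge> b + c2 * t - c1 * s" if s: "s \<in> {0<..<t}" for s
  proof (rule ccontr)
    assume nc: "\<not> ?thesis"
    define d where "d = b + c2 * t - c1 * s - (f (-s) - f (-t))"
    have d: "d > 0" using nc by (simp add: d_def)
    define e where "e = d / (2 + s + \<bar>t\<bar>)"
    have den: "2 + s + \<bar>t\<bar> > 0" using s by auto
    have e: "e > 0" using d den by (simp add: e_def)
    then obtain g where g: "g \<in> S_t b c1 c2 t" "omega_norm (\<lambda>x. f x - g x) < e"
      using f by (auto simp: omega_closure_def)
    have gO: "g \<in> Omega" and gs: "g (-s) - g (-t) > b + c2 * t - c1 * s"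
      using g(1) s by (auto simp: S_t_def)
    have w: "(\<lambda>x. f x - g x) \<in> Omega" by (rule omega_diff[OF fO gO])
    have "\<bar>f (-s) - g (-s)\<bar> \<le> omega_norm (\<lambda>x. f x - g x) * (1+\<bar>-s\<bar>)"
      using omega_pt[OF w, of "-s"] by simp
    also have "\<dots> \<le> e * (1+s)" using g(2) s e by (intro mult_mono) auto
    finally have 1: "\<bar>f (-s) - g (-s)\<bar> \<le> e * (1+s)" .
    have "\<bar>f (-t) - g (-t)\<bar> \<le> omega_norm (\<lambda>x. f x - g x) * (1+\<bar>-t\<bar>)"
      using omega_pt[OF w, of "-t"] by simp
    also have "\<dots> \<le> e * (1+\<bar>t\<bar>)" using g(2) e by (intro mult_mono) auto
    finally have 2: "\<bar>f (-t) - g (-t)\<bar> \<le> e * (1+\<bar>t\<bar>)" .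
    have "e*(1+s) + e*(1+\<bar>t\<bar>) = e*(2+s+\<bar>t\<bar>)" by (simp add: algebra_simps)
    also have "\<dots> = d" using den by (simp add: e_def)
    finally have "e*(1+s) + e*(1+\<bar>t\<bar>) = d" .
    then show False using 1 2 gs d_def by linarith
  qed
  then show "f \<in> {f \<in> Omega. \<forall>s\<in>{0<..<t}. f (-s) - f (-t) \<ge> b + c2 * t - c1 * s}"
    using fO by auto
next
  fix f assume f: "f \<in> {f \<in> Omega. \<forall>s\<in>{0<..<t}. f (-s) - f (-t) \<ge> b + c2 * t - c1 * s}"
  then have fO: "f \<in> Omega" and fs: "\<And>s. s \<in> {0<..<t} \<Longrightarrow> f (-s) - f (-t) \<ge> b + c2 * t - c1 * s"
    by auto
  show "f \<in> omega_closure (S_t b c1 c2 t)" unfolding omega_closure_def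
  proof (intro CollectI conjI allI impI fO)
    fix e :: real assume e: "e > 0"
    define \<epsilon> where "\<epsilon> = e / (2 * (\<bar>t\<bar> + 1))"
    have ep: "\<epsilon> > 0" using e by (simp add: \<epsilon>_def add_pos_nonneg)
    define g where "g = (\<lambda>x. f x + (- \<epsilon> * min \<bar>x\<bar> \<bar>t\<bar>))"
    have bd: "\<bar>- \<epsilon> * min \<bar>x\<bar> \<bar>t\<bar>\<bar> \<le> \<epsilon> * \<bar>t\<bar>" for x
      using ep by (auto simp: abs_mult)
    have gO: "g \<in> Omega" unfolding g_def
      by (rule omega_addb[OF fO _ _ bd]) (auto intro!: continuous_intros)
    have "g (-s) - g (-t) > b + c2 * t - c1 * s" if s: "s \<in> {0<..<t}" for s
    proof -
      have "g (-s) - g (-t) = f (-s) - f (-t) + \<epsilon> * (t - s)"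
        using s by (auto simp: g_def algebra_simps)
      moreover have "\<epsilon> * (t - s) > 0" using s ep by auto
      ultimately show ?thesis using fs[OF s] by linarith
    qed
    then have gS: "g \<in> S_t b c1 c2 t" using gO by (auto simp: S_t_def)
    have "omega_norm (\<lambda>x. f x - g x) \<le> \<epsilon> * \<bar>t\<bar>"
    proof (rule norm_le)
      fix x
      have "\<bar>f x - g x\<bar> \<le> \<epsilon> * \<bar>t\<bar>" using bd[of x] by (simp add: g_def)
      also have "\<dots> \<le> \<epsilon> * \<bar>t\<bar> * (1 + \<bar>x\<bar>)" using mult_left_mono[of 1 "1+\<bar>x\<bar>" "\<epsilon>*\<bar>t\<bar>"] ep by simp
      finally show "\<bar>f x - g x\<bar> / (1 + \<bar>x\<bar>) \<le> \<epsilon> * \<bar>t\<bar>"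
        by (simp add: pos_divide_le_eq add_pos_nonneg)
    qed
    also have "\<epsilon> * \<bar>t\<bar> < e" using e
      by (simp add: \<epsilon>_def field_simps add_pos_nonneg) (metis add_nonneg_pos abs_ge_zero mult_nonneg_nonneg mult_pos_pos zero_less_numeral less_imp_le)
    finally show "\<exists>g\<in>S_t b c1 c2 t. omega_norm (\<lambda>x. f x - g x) < e" using gS by blast
  qed
qed

lemma part2_t0:
  fixes b c1 c2 :: real
  assumes "b > 0" "c1 > c2" "c2 > 0"
  and f: "f \<in> omega_closure (S_t b c1 c2 (t_zero b c1 c2))"
  shows "f \<in> omega_closure (S_set b c1 c2)"
proof -
  define T0 where "T0 = t_zero b c1 c2"
  have T0: "T0 > 0" using assms by (simp add: T0_def t_zero_def)
  have bT: "b = (c1 - c2) * T0" using assms by (simp add: T0_def t_zero_def)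
  have c1: "c1 > 0" using assms by simp
  from f have fO: "f \<in> Omega"
    and fs: "\<And>s. s \<in> {0<..<T0} \<Longrightarrow> f (-s) - f (-T0) \<ge> b + c2 * T0 - c1 * s"
    unfolding closure_St T0_def by auto
  have fc: "continuous_on UNIV f" using fO by (simp add: Omega_def)
  show ?thesis unfolding omega_closure_def
  proof (intro CollectI conjI allI impI fO)
    fix e :: real assume e: "e > 0"
    have "isCont f (-T0)" by (rule cont_isCont[OF fc])
    then obtain \<delta> where \<delta>: "\<delta> > 0"
      and \<delta>': "\<And>y. y \<noteq> -T0 \<Longrightarrow> \<bar>y - (-T0)\<bar> < \<delta> \<Longrightarrow> \<bar>f y - f (-T0)\<bar> < e/2"
      using e unfolding isCont_def LIM_eq by (metis real_norm_def half_gt_zero)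
    define \<eta> where "\<eta> = min (\<delta>/2) (e/(2*c1+2))"
    have \<eta>: "\<eta> > 0" using \<delta> e c1 by (simp add: \<eta>_def)
    have \<eta>d: "\<eta> < \<delta>" using \<delta> by (simp add: \<eta>_def)
    have "c1 * \<eta> \<le> c1 * (e/(2*c1+2))" using c1 by (intro mult_left_mono) (auto simp: \<eta>_def)
    also have "\<dots> < e/2" using c1 e by (simp add: field_simps)
    finally have c1\<eta>: "c1 * \<eta> < e/2" .
    have c12: "c2 * \<eta> < c1 * \<eta>" using assms \<eta> by simp
    define t where "t = T0 + \<eta>"
    define p where "p = (\<lambda>x::real. max (-t) (min (-T0) x))"
    define \<psi> where "\<psi> = (\<lambda>x. f (-T0) - f (p x) - c1 * (-T0 - p x))"
    define g where "g = (\<lambda>x. f x + \<psi> x)"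
    have pr: "-t \<le> p x \<and> p x \<le> -T0" for x using \<eta> by (auto simp: p_def t_def)
    have fp: "\<bar>f (p x) - f (-T0)\<bar> < e/2" for x
    proof (cases "p x = -T0")
      case True then show ?thesis using e by simp
    next
      case False
      have "\<bar>p x - (-T0)\<bar> < \<delta>" using pr[of x] \<eta>d by (auto simp: t_def)
      then show ?thesis using \<delta>'[OF False] by blast
    qed
    have \<psi>b: "\<bar>\<psi> x\<bar> \<le> e/2 + c1 * \<eta>" for x
    proof -
      have a: "0 \<le> -T0 - p x" "-T0 - p x \<le> \<eta>" using pr[of x] by (auto simp: t_def)
      have "c1 * (-T0 - p x) \<le> c1 * \<eta>" using a c1 by (intro mult_left_mono) auto
      moreover have "0 \<le> c1 * (-T0 - p x)" using a c1 by simp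
      ultimately show ?thesis using fp[of x] unfolding \<psi>_def by linarith
    qed
    have fpc: "continuous_on UNIV (\<lambda>x. f (p x))"
      by (rule continuous_on_compose2[OF fc]) (auto simp: p_def intro!: continuous_intros)
    have \<psi>c: "continuous_on UNIV \<psi>" unfolding \<psi>_def
      by (intro continuous_intros fpc) (auto simp: p_def intro!: continuous_intros)
    have p0: "p 0 = -T0" using T0 \<eta> by (simp add: p_def t_def)
    have \<psi>0: "\<psi> 0 = 0" by (simp add: \<psi>_def p0)
    have gO: "g \<in> Omega" unfolding g_def by (rule omega_addb[OF fO \<psi>c \<psi>0 \<psi>b])
    have pt: "p (-t) = -t" using \<eta> by (simp add: p_def t_def)
    have gt: "g (-t) = f (-T0) - c1 * \<eta>" by (simp add: g_def \<psi>_def pt) (simp add: t_def algebra_simps)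
    have "g (-s) - g (-t) > b + c2 * t - c1 * s" if s: "s \<in> {0<..<t}" for s
    proof (cases "s < T0")
      case True
      have "p (-s) = -T0" using True \<eta> by (simp add: p_def t_def)
      then have "g (-s) = f (-s)" by (simp add: g_def \<psi>_def)
      then have "g (-s) - g (-t) = f (-s) - f (-T0) + c1 * \<eta>" using gt by simp
      moreover have "f (-s) - f (-T0) \<ge> b + c2 * T0 - c1 * s" using fs True s by auto
      moreover have "c2 * t = c2 * T0 + c2 * \<eta>" by (simp add: t_def algebra_simps)
      ultimately show ?thesis using c12 by linarith
    next
      case False
      have "p (-s) = -s" using False s \<eta> by (simp add: p_def t_def)
      then have "g (-s) = f (-T0) - c1 * (s - T0)" by (simp add: g_def \<psi>_def algebra_simps)
      then have "g (-s) - g (-t) = c1 * T0 + c1 * \<eta> - c1 * s" using gt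
        by (simp add: algebra_simps)
      moreover have "b + c2 * t - c1 * s = c1 * T0 + c2 * \<eta> - c1 * s"
        by (simp add: bT t_def algebra_simps)
      ultimately show ?thesis using c12 by linarith
    qed
    then have "g \<in> S_t b c1 c2 t" using gO by (auto simp: S_t_def)
    moreover have "t \<in> {t_zero b c1 c2<..}" using \<eta> by (simp add: t_def T0_def)
    ultimately have gS: "g \<in> S_set b c1 c2" by (auto simp: S_set_def)
    have "omega_norm (\<lambda>x. f x - g x) \<le> e/2 + c1 * \<eta>"
    proof (rule norm_le)
      fix x
      have "\<bar>f x - g x\<bar> \<le> e/2 + c1 * \<eta>" using \<psi>b[of x] by (simp add: g_def)
      also have "\<dots> \<le> (e/2 + c1 * \<eta>) * (1 + \<bar>x\<bar>)"
        using mult_left_mono[of 1 "1+\<bar>x\<bar>" "e/2 + c1 * \<eta>"] e c1 \<eta> by simp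
      finally show "\<bar>f x - g x\<bar> / (1 + \<bar>x\<bar>) \<le> e/2 + c1 * \<eta>"
        by (simp add: pos_divide_le_eq add_pos_nonneg)
    qed
    also have "\<dots> < e" using c1\<eta> by linarith
    finally show "\<exists>g\<in>S_set b c1 c2. omega_norm (\<lambda>x. f x - g x) < e" using gS by blast
  qed
qed

lemma part2_sub:
  fixes b c1 c2 :: real
  assumes "b > 0" "c1 > c2" "c2 > 0"
  and f: "f \<in> omega_closure (S_set b c1 c2)"
  shows "\<exists>t\<ge>t_zero b c1 c2. f \<in> omega_closure (S_t b c1 c2 t)"
proof -
  define T0 where "T0 = t_zero b c1 c2"
  have T0: "T0 > 0" using assms by (simp add: T0_def t_zero_def)
  have c1: "c1 > 0" using assms by simp
  have fO: "f \<in> Omega" using f by (simp add: omega_closure_def)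
  have fc: "continuous_on UNIV f" using fO by (simp add: Omega_def)
  have lb: "((\<lambda>x. f x / (1+\<bar>x\<bar>)) \<longlongrightarrow> 0) at_bot" using fO by (simp add: Omega_def)
  define s0 where "s0 = T0/2"
  define K where "K = \<bar>f (-s0)\<bar> + (1 + s0) + c1 * s0"
  have "eventually (\<lambda>x. dist (f x / (1+\<bar>x\<bar>)) 0 < c2/4) at_bot"
    by (rule tendstoD[OF lb]) (simp add: assms)
  then obtain N where N: "\<And>x. x \<le> N \<Longrightarrow> \<bar>f x / (1+\<bar>x\<bar>)\<bar> < c2/4"
    by (auto simp: eventually_at_bot_linorder dist_real_def)
  define B where "B = max (max (-N) 0) (2*K/c2 + 1)"
  define \<epsilon> where "\<epsilon> = (\<lambda>n. min (c2/4) (inverse (real (Suc n))))"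
  have \<epsilon>p: "\<epsilon> n > 0" for n using assms by (simp add: \<epsilon>_def)
  have \<epsilon>1: "\<epsilon> n \<le> inverse (real (Suc n))" for n by (simp add: \<epsilon>_def)
  have \<epsilon>2: "\<epsilon> n \<le> c2/4" for n by (simp add: \<epsilon>_def)
  have i1: "inverse (real (Suc n)) \<le> 1" for n by (simp add: inverse_le_1_iff)
  have \<epsilon>3: "\<epsilon> n \<le> 1" for n using \<epsilon>1[of n] i1[of n] by linarith
  have "\<forall>n. \<exists>g. g \<in> S_set b c1 c2 \<and> omega_norm (\<lambda>x. f x - g x) < \<epsilon> n"
    using f \<epsilon>p unfolding omega_closure_def by blast
  then obtain G where G: "\<And>n. G n \<in> S_set b c1 c2"
    "\<And>n. omega_norm (\<lambda>x. f x - G n x) < \<epsilon> n" by metis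
  have "\<forall>n. \<exists>t. t > T0 \<and> G n \<in> S_t b c1 c2 t" using G(1) by (auto simp: S_set_def T0_def)
  then obtain T where T: "\<And>n. T n > T0" "\<And>n. G n \<in> S_t b c1 c2 (T n)" by metis
  have GO: "G n \<in> Omega" for n using T(2)[of n] by (simp add: S_t_def)
  have Gs: "G n (-s) - G n (-T n) > b + c2 * T n - c1 * s" if "s \<in> {0<..<T n}" for n s
    using T(2)[of n] that by (simp add: S_t_def)
  have err: "\<bar>f x - G n x\<bar> \<le> \<epsilon> n * (1 + \<bar>x\<bar>)" for n x
  proof -
    have "\<bar>f x - G n x\<bar> \<le> omega_norm (\<lambda>x. f x - G n x) * (1 + \<bar>x\<bar>)"
      by (rule omega_pt[OF omega_diff[OF fO GO]])
    also have "\<dots> \<le> \<epsilon> n * (1 + \<bar>x\<bar>)" using G(2)[of n] by (intro mult_right_mono) auto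
    finally show ?thesis .
  qed
  have TB: "T n \<le> B" for n
  proof (rule ccontr)
    assume nb: "\<not> T n \<le> B"
    define t where "t = T n"
    have t: "t > B" using nb by (simp add: t_def)
    have tN: "-t \<le> N" "t \<ge> 0" "t > 2*K/c2 + 1" using t by (auto simp: B_def)
    have s0: "s0 \<in> {0<..<T n}" using T(1)[of n] T0 by (simp add: s0_def)
    have 1: "G n (-s0) - G n (-t) > b + c2 * t - c1 * s0" using Gs[OF s0] by (simp add: t_def)
    have "\<bar>f (-s0) - G n (-s0)\<bar> \<le> \<epsilon> n * (1 + s0)" using err[of "-s0" n] T0 by (simp add: s0_def)
    also have "\<dots> \<le> 1 * (1 + s0)" using \<epsilon>3[of n] T0 by (intro mult_right_mono) (auto simp: s0_def)
    finally have 2: "\<bar>f (-s0) - G n (-s0)\<bar> \<le> 1 + s0" by simp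
    have "\<bar>f (-t) - G n (-t)\<bar> \<le> \<epsilon> n * (1 + t)" using err[of "-t" n] tN by simp
    also have "\<dots> \<le> c2/4 * (1 + t)" using \<epsilon>2[of n] tN by (intro mult_right_mono) auto
    finally have 3: "\<bar>f (-t) - G n (-t)\<bar> \<le> c2/4 + c2 * t / 4" by (simp add: algebra_simps)
    have "\<bar>f (-t) / (1 + t)\<bar> < c2/4" using N[OF tN(1)] tN by simp
    then have "\<bar>f (-t)\<bar> < c2/4 * (1 + t)" using tN by (simp add: abs_divide divide_less_eq)
    then have 4: "\<bar>f (-t)\<bar> < c2/4 + c2 * t / 4" by (simp add: algebra_simps)
    have "c2 * t > c2 * (2*K/c2 + 1)" using tN assms by (intro mult_strict_left_mono) auto
    moreover have "c2 * (2*K/c2 + 1) = 2*K + c2" using assms by (simp add: distrib_left)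
    ultimately have 5: "c2 * t > 2 * K + c2" by linarith
    have 6: "f (-s0) \<le> \<bar>f (-s0)\<bar>" by simp
    from 2 3 4 have "G n (-s0) \<le> f (-s0) + (1 + s0)" "f (-t) - G n (-t) \<le> c2/4 + c2 * t / 4"
       "- (c2/4 + c2 * t / 4) < f (-t)" by (simp_all add: abs_le_iff abs_less_iff)
    moreover have "c2 * t > 2 * \<bar>f (-s0)\<bar> + 2 + 2 * s0 + 2 * (c1 * s0) + c2"
      using 5 by (simp add: K_def algebra_simps)
    ultimately show False using 1 6 assms(1) by linarith
  qed
  have "\<forall>n. T n \<in> {T0..B}" using T(1) TB by (simp add: less_imp_le)
  then obtain l r where l: "l \<in> {T0..B}" and r: "strict_mono r" and lim: "(T \<circ> r) \<longlonglongrightarrow> l"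
    using compact_imp_seq_compact[OF compact_Icc[of T0 B]] unfolding seq_compact_def by metis
  have lim': "(\<lambda>n. T (r n)) \<longlonglongrightarrow> l" using lim by (simp add: o_def)
  have "f (-s) - f (-l) \<ge> b + c2 * l - c1 * s" if s: "s \<in> {0<..<l}" for s
  proof -
    have "eventually (\<lambda>n. s < T (r n)) sequentially" using order_tendstoD(1)[OF lim'] s by simp
    then obtain M where M: "\<And>n. n \<ge> M \<Longrightarrow> s < T (r n)" by (auto simp: eventually_sequentially)
    define X where "X = (\<lambda>n. b + c2 * T (r n) - c1 * s - inverse (real (Suc (r n))) * (2 + s + B))"
    define Y where "Y = (\<lambda>n. f (-s) - f (- T (r n)))"
    have inv: "(\<lambda>n. inverse (real (Suc (r n)))) \<longlonglongrightarrow> 0"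
      using LIMSEQ_subseq_LIMSEQ[OF LIMSEQ_inverse_real_of_nat r] by (simp add: o_def)
    have "X \<longlonglongrightarrow> b + c2 * l - c1 * s - 0 * (2 + s + B)" unfolding X_def
      by (intro tendsto_intros lim' inv)
    then have X: "X \<longlonglongrightarrow> b + c2 * l - c1 * s" by simp
    have "(\<lambda>n. f (- T (r n))) \<longlonglongrightarrow> f (-l)"
      by (rule isCont_tendsto_compose[OF cont_isCont[OF fc]]) (intro tendsto_intros lim')
    then have Y: "Y \<longlonglongrightarrow> f (-s) - f (-l)" unfolding Y_def by (intro tendsto_intros)
    have "X n \<le> Y n" if n: "n \<ge> M" for n
    proof -
      define i where "i = inverse (real (Suc (r n)))"
      have i0: "i \<ge> 0" by (simp add: i_def)
      have sT: "s < T (r n)" using M[OF n] .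
      have g: "G (r n) (-s) - G (r n) (-T (r n)) > b + c2 * T (r n) - c1 * s"
        using Gs[of s "r n"] s sT by simp
      have "\<bar>f (-s) - G (r n) (-s)\<bar> \<le> \<epsilon> (r n) * (1 + s)" using err[of "-s" "r n"] s by simp
      also have "\<dots> \<le> i * (1 + s)" using \<epsilon>1[of "r n"] s by (intro mult_right_mono) (auto simp: i_def)
      finally have e1: "\<bar>f (-s) - G (r n) (-s)\<bar> \<le> i * (1 + s)" .
      have "\<bar>f (-T (r n)) - G (r n) (-T (r n))\<bar> \<le> \<epsilon> (r n) * (1 + T (r n))"
        using err[of "-T (r n)" "r n"] T(1)[of "r n"] T0 by simp
      also have "\<dots> \<le> i * (1 + B)" using \<epsilon>1[of "r n"] TB[of "r n"] T(1)[of "r n"] T0 i0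
        by (intro mult_mono) (auto simp: i_def)
      finally have e2: "\<bar>f (-T (r n)) - G (r n) (-T (r n))\<bar> \<le> i * (1 + B)" .
      have "i * (1 + s) + i * (1 + B) = i * (2 + s + B)" by (simp add: algebra_simps)
      then show ?thesis using g e1 e2 unfolding X_def Y_def i_def[symmetric] by linarith
    qed
    then show ?thesis using LIMSEQ_le[OF X Y] by blast
  qed
  then have "f \<in> omega_closure (S_t b c1 c2 l)" unfolding closure_St using fO by auto
  then show ?thesis using l by (auto simp: T0_def)
qed

theorem lemmaA1:
  fixes b c1 c2 :: real
  assumes "b > 0" and "c1 > c2" and "c2 > 0"
  shows "(\<forall>t\<ge>t_zero b c1 c2. omega_closure (S_t b c1 c2 t) =
            {f \<in> Omega. \<forall>s\<in>{0<..<t}. f (-s) - f (-t) \<ge> b + c2 * t - c1 * s})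
       \<and> omega_closure (S_set b c1 c2) = (\<Union>t\<in>{t_zero b c1 c2..}. omega_closure (S_t b c1 c2 t))"
proof -
  have A: "\<forall>t\<ge>t_zero b c1 c2. omega_closure (S_t b c1 c2 t) =
            {f \<in> Omega. \<forall>s\<in>{0<..<t}. f (-s) - f (-t) \<ge> b + c2 * t - c1 * s}"
    using closure_St by blast
  have "omega_closure (S_set b c1 c2) = (\<Union>t\<in>{t_zero b c1 c2..}. omega_closure (S_t b c1 c2 t))"
  proof (intro equalityI subsetI)
  fix f assume "f \<in> omega_closure (S_set b c1 c2)"
  then show "f \<in> (\<Union>t\<in>{t_zero b c1 c2..}. omega_closure (S_t b c1 c2 t))"
    using part2_sub[OF assms] by auto
next
  fix f assume "f \<in> (\<Union>t\<in>{t_zero b c1 c2..}. omega_closure (S_t b c1 c2 t))"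
  then obtain t where t: "t \<ge> t_zero b c1 c2" and f: "f \<in> omega_closure (S_t b c1 c2 t)" by auto
  show "f \<in> omega_closure (S_set b c1 c2)"
  proof (cases "t = t_zero b c1 c2")
    case True then show ?thesis using part2_t0[OF assms] f by simp
  next
    case False
    then have "t \<in> {t_zero b c1 c2<..}" using t by simp
    then have "S_t b c1 c2 t \<subseteq> S_set b c1 c2" unfolding S_set_def by blast
    then show ?thesis using f unfolding omega_closure_def by blast
  qed
  qed
  then show ?thesis using A by blast
qed

end
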